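(* Let $R$ be an associative ring with identity. The following are equivalent: (1) $R$ has stable range one; (2) for every $c \in R$ and every $x \in R$ such that $yx - 1 \in Rc$ for some $y \in R$, there exists a left unit $u \in R$ with $x - u \in Rc$; (3) for every $c \in R$ and every $x \in R$ such that $xy - 1 \in cR$ for some $y \in R$, there exists a right unit $u \in R$ with $x - u \in cR$.
   Context: A ring $R$ has stable range one if whenever $a, b, x \in R$ satisfy $ax + b = 1$, there exists $y \in R$ such that $a + by$ is a unit (invertible element) of $R$. An element $u \in R$ is a left unit if there exists $v \in R$ with $vu = 1$, and a right unit if there exists $v \in R$ with $uv = 1$. Condition (2) is what the paper calls "every left unit lifts modulo every left principal ideal", and condition (3) is what it calls "every right unit lifts modulo every right principal ideal". *)

theory Defs
  imports Main
begin

definition is_unit :: "'a::ring_1 \<Rightarrow> bool" where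
  "is_unit u \<longleftrightarrow> (\<exists>v. u * v = 1 \<and> v * u = 1)"

definition left_unit :: "'a::ring_1 \<Rightarrow> bool" where
  "left_unit u \<longleftrightarrow> (\<exists>v. v * u = 1)"

definition right_unit :: "'a::ring_1 \<Rightarrow> bool" where
  "right_unit u \<longleftrightarrow> (\<exists>v. u * v = 1)"

definition stable_range_one :: "'a::ring_1 itself \<Rightarrow> bool" where
  "stable_range_one _ \<longleftrightarrow>
     (\<forall>a b x :: 'a. a * x + b = 1 \<longrightarrow> (\<exists>y. is_unit (a + b * y)))"

definition left_principal :: "'a::ring_1 \<Rightarrow> 'a set" where
  "left_principal c = {r * c | r. True}"

definition right_principal :: "'a::ring_1 \<Rightarrow> 'a set" where
  "right_principal c = {c * r | r. True}"

end

theory Submission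
  imports Defs
begin

lemma key1:
  fixes a x y u u' :: "'a::ring_1"
  assumes uu: "u' * u = 1" and uu2: "u * u' = 1" and hu: "u = a + (1 - a*x)*y"
  shows "is_unit (x + (1 - x*y)*u'*(1 - a*x))"
proof -
  define w where "w = a + y - y*x*a"
  define v where "v = x + (1 - x*y)*u'*(1 - a*x)"
  have h1: "(1 - a*x)*w = u*(1 - x*a)" unfolding w_def hu by (simp add: algebra_simps)
  have h2: "w*(1 - x*y) = (1 - y*x)*u" unfolding w_def hu by (simp add: algebra_simps)
  have "v*w = x*w + (1 - x*y)*u'*((1 - a*x)*w)" unfolding v_def by (simp add: algebra_simps)
  also have "\<dots> = x*w + (1 - x*y)*(u'*u)*(1 - x*a)" by (simp add: h1 mult.assoc)
  also have "\<dots> = 1" unfolding uu w_def by (simp add: algebra_simps)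
  finally have 1: "v*w = 1" .
  have "w*v = w*x + (w*(1 - x*y))*u'*(1 - a*x)" unfolding v_def by (simp add: algebra_simps)
  also have "\<dots> = w*x + (1 - y*x)*(u*u')*(1 - a*x)" by (simp add: h2 mult.assoc)
  also have "\<dots> = 1" unfolding uu2 w_def by (simp add: algebra_simps)
  finally have 2: "w*v = 1" .
  show ?thesis using 1 2 unfolding is_unit_def v_def by blast
qed

lemma key2:
  fixes a x y u u' :: "'a::ring_1"
  assumes uu: "u' * u = 1" and uu2: "u * u' = 1" and hu: "u = a + y*(1 - x*a)"
  shows "is_unit (x + (1 - x*a)*u'*(1 - y*x))"
proof -
  define w where "w = a + y - a*x*y"
  define v where "v = x + (1 - x*a)*u'*(1 - y*x)"
  have h1: "(1 - y*x)*w = u*(1 - x*y)" unfolding w_def hu by (simp add: algebra_simps)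
  have h2: "w*(1 - x*a) = (1 - a*x)*u" unfolding w_def hu by (simp add: algebra_simps)
  have "v*w = x*w + (1 - x*a)*u'*((1 - y*x)*w)" unfolding v_def by (simp add: algebra_simps)
  also have "\<dots> = x*w + (1 - x*a)*(u'*u)*(1 - x*y)" by (simp add: h1 mult.assoc)
  also have "\<dots> = 1" unfolding uu w_def by (simp add: algebra_simps)
  finally have 1: "v*w = 1" .
  have "w*v = w*x + (w*(1 - x*a))*u'*(1 - y*x)" unfolding v_def by (simp add: algebra_simps)
  also have "\<dots> = w*x + (1 - a*x)*(u*u')*(1 - y*x)" by (simp add: h2 mult.assoc)
  also have "\<dots> = 1" unfolding uu2 w_def by (simp add: algebra_simps)
  finally have 2: "w*v = 1" .
  show ?thesis using 1 2 unfolding is_unit_def v_def by blast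
qed

definition left_sr1 :: "'a::ring_1 itself \<Rightarrow> bool" where
  "left_sr1 _ \<longleftrightarrow> (\<forall>a b x :: 'a. x * a + b = 1 \<longrightarrow> (\<exists>y. is_unit (a + y * b)))"

lemma R_imp_L: "stable_range_one TYPE('a::ring_1) \<Longrightarrow> left_sr1 TYPE('a)"
  unfolding left_sr1_def
proof (intro allI impI)
  fix a b x :: 'a
  assume R: "stable_range_one TYPE('a)" and e: "x * a + b = 1"
  hence b: "b = 1 - x*a" by (simp add: algebra_simps)
  have "x * a + (1 - x*a) = 1" by simp
  with R obtain y where "is_unit (x + (1 - x*a)*y)"
    unfolding stable_range_one_def by blast
  then obtain u' where "(x + (1 - x*a)*y) * u' = 1" "u' * (x + (1 - x*a)*y) = 1"
    unfolding is_unit_def by blast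
  from key1[OF this(2) this(1) refl] have "is_unit (a + ((1 - a*y)*u')*(1 - x*a))"
    by (simp add: mult.assoc)
  thus "\<exists>y. is_unit (a + y * b)" using b by blast
qed

lemma L_imp_R: "left_sr1 TYPE('a::ring_1) \<Longrightarrow> stable_range_one TYPE('a)"
  unfolding stable_range_one_def
proof (intro allI impI)
  fix a b x :: 'a
  assume L: "left_sr1 TYPE('a)" and e: "a * x + b = 1"
  hence b: "b = 1 - a*x" by (simp add: algebra_simps)
  have "a * x + (1 - a*x) = 1" by simp
  with L obtain y where "is_unit (x + y*(1 - a*x))"
    unfolding left_sr1_def by blast
  then obtain u' where "(x + y*(1 - a*x)) * u' = 1" "u' * (x + y*(1 - a*x)) = 1"
    unfolding is_unit_def by blast
  from key2[OF this(2) this(1) refl] have "is_unit (a + (1 - a*x)*(u'*(1 - y*a)))"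
    by (simp add: mult.assoc)
  thus "\<exists>y. is_unit (a + b * y)" using b by blast
qed

lemma R_iff3:
  "stable_range_one TYPE('a::ring_1)
   \<longleftrightarrow> (\<forall>c x :: 'a. (\<exists>y. x * y - 1 \<in> right_principal c) \<longrightarrow>
                  (\<exists>u. right_unit u \<and> x - u \<in> right_principal c))"
proof
  assume R: "stable_range_one TYPE('a)"
  show "\<forall>c x :: 'a. (\<exists>y. x * y - 1 \<in> right_principal c) \<longrightarrow>
                  (\<exists>u. right_unit u \<and> x - u \<in> right_principal c)"
  proof (intro allI impI)
    fix c x :: 'a
    assume "\<exists>y. x * y - 1 \<in> right_principal c"
    then obtain y r where "x * y - 1 = c * r" unfolding right_principal_def by blast
    hence "x * y + c * (- r) = 1" by (simp add: algebra_simps)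
    with R obtain z where "is_unit (x + c*(-r)*z)"
      unfolding stable_range_one_def by blast
    moreover have "x - (x + c*(-r)*z) = c * (r*z)" by (simp add: algebra_simps)
    ultimately show "\<exists>u. right_unit u \<and> x - u \<in> right_principal c"
      unfolding right_unit_def is_unit_def right_principal_def by blast
  qed
next
  assume H: "\<forall>c x :: 'a. (\<exists>y. x * y - 1 \<in> right_principal c) \<longrightarrow>
                  (\<exists>u. right_unit u \<and> x - u \<in> right_principal c)"
  have DF: "v * u = 1" if uv: "u * v = 1" for u v :: 'a
  proof -
    define e where "e = 1 - v*u"
    have "v * u - 1 \<in> right_principal e" unfolding right_principal_def e_def
      by (rule CollectI, rule exI[of _ "-1"]) (simp add: algebra_simps)
    with H obtain w where "right_unit w" "v - w \<in> right_principal e" by blast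
    then obtain z s where wz: "w * z = 1" and "v - w = e * s"
      unfolding right_unit_def right_principal_def by blast
    hence wv: "w = v - e*s" by (simp add: algebra_simps)
    have ue: "u * e = 0" unfolding e_def using uv
      by (simp add: algebra_simps flip: mult.assoc)
    have uw: "u * w = 1" unfolding wv using uv ue
      by (simp add: algebra_simps flip: mult.assoc)
    have "z = u" using uw wz by (metis mult.assoc mult_1_left mult_1_right)
    hence "w * u = 1" using wz by simp
    have "v = w" using uv \<open>w*u = 1\<close> by (metis mult.assoc mult_1_left mult_1_right)
    thus ?thesis using \<open>w*u = 1\<close> by simp
  qed
  show "stable_range_one TYPE('a)" unfolding stable_range_one_def
  proof (intro allI impI)
    fix a b x :: 'a
    assume "a * x + b = 1"
    hence "a * x - 1 \<in> right_principal b" unfolding right_principal_def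
      by (rule_tac CollectI, rule_tac exI[of _ "-1"]) (simp add: algebra_simps)
    with H obtain w where "right_unit w" "a - w \<in> right_principal b" by blast
    then obtain z s where wz: "w * z = 1" and "a - w = b * s"
      unfolding right_unit_def right_principal_def by blast
    hence "w = a + b * (-s)" by (simp add: algebra_simps)
    moreover have "is_unit w" using wz DF[OF wz] unfolding is_unit_def by blast
    ultimately show "\<exists>y. is_unit (a + b * y)" by blast
  qed
qed

lemma L_iff2:
  "left_sr1 TYPE('a::ring_1)
   \<longleftrightarrow> (\<forall>c x :: 'a. (\<exists>y. y * x - 1 \<in> left_principal c) \<longrightarrow>
                  (\<exists>u. left_unit u \<and> x - u \<in> left_principal c))"
proof
  assume L: "left_sr1 TYPE('a)"
  show "\<forall>c x :: 'a. (\<exists>y. y * x - 1 \<in> left_principal c) \<longrightarrow>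
                  (\<exists>u. left_unit u \<and> x - u \<in> left_principal c)"
  proof (intro allI impI)
    fix c x :: 'a
    assume "\<exists>y. y * x - 1 \<in> left_principal c"
    then obtain y r where "y * x - 1 = r * c" unfolding left_principal_def by blast
    hence "y * x + (- r) * c = 1" by (simp add: algebra_simps)
    with L obtain z where "is_unit (x + z*((-r)*c))"
      unfolding left_sr1_def by blast
    moreover have "x - (x + z*((-r)*c)) = (z*r) * c" by (simp add: algebra_simps)
    ultimately show "\<exists>u. left_unit u \<and> x - u \<in> left_principal c"
      unfolding left_unit_def is_unit_def left_principal_def by blast
  qed
next
  assume H: "\<forall>c x :: 'a. (\<exists>y. y * x - 1 \<in> left_principal c) \<longrightarrow>
                  (\<exists>u. left_unit u \<and> x - u \<in> left_principal c)"
  have DF: "u * v = 1" if vu: "v * u = 1" for u v :: 'a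
  proof -
    define e where "e = 1 - u*v"
    have "u * v - 1 \<in> left_principal e" unfolding left_principal_def e_def
      by (rule CollectI, rule exI[of _ "-1"]) (simp add: algebra_simps)
    with H obtain w where "left_unit w" "v - w \<in> left_principal e" by blast
    then obtain z s where wz: "z * w = 1" and "v - w = s * e"
      unfolding left_unit_def left_principal_def by blast
    hence wv: "w = v - s*e" by (simp add: algebra_simps)
    have ue: "e * u = 0" unfolding e_def using vu
      by (simp add: algebra_simps mult.assoc)
    have uw: "w * u = 1" unfolding wv using vu ue
      by (simp add: algebra_simps mult.assoc)
    have "z = u" using uw wz by (metis mult.assoc mult_1_left mult_1_right)
    hence "u * w = 1" using wz by simp
    have "v = w" using vu \<open>u*w = 1\<close> by (metis mult.assoc mult_1_left mult_1_right)
    thus ?thesis using \<open>u*w = 1\<close> by simp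
  qed
  show "left_sr1 TYPE('a)" unfolding left_sr1_def
  proof (intro allI impI)
    fix a b x :: 'a
    assume "x * a + b = 1"
    hence "x * a - 1 \<in> left_principal b" unfolding left_principal_def
      by (rule_tac CollectI, rule_tac exI[of _ "-1"]) (simp add: algebra_simps)
    with H obtain w where "left_unit w" "a - w \<in> left_principal b" by blast
    then obtain z s where wz: "z * w = 1" and "a - w = s * b"
      unfolding left_unit_def left_principal_def by blast
    hence "w = a + (-s) * b" by (simp add: algebra_simps)
    moreover have "is_unit w" using wz DF[OF wz] unfolding is_unit_def by blast
    ultimately show "\<exists>y. is_unit (a + y * b)" by blast
  qed
qed

theorem theorem3:
  shows "(stable_range_one TYPE('a::ring_1)
           \<longleftrightarrow> (\<forall>c x :: 'a. (\<exists>y. y * x - 1 \<in> left_principal c) \<longrightarrow>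
                  (\<exists>u. left_unit u \<and> x - u \<in> left_principal c)))
       \<and> (stable_range_one TYPE('a)
           \<longleftrightarrow> (\<forall>c x :: 'a. (\<exists>y. x * y - 1 \<in> right_principal c) \<longrightarrow>
                  (\<exists>u. right_unit u \<and> x - u \<in> right_principal c)))"
  using R_imp_L L_imp_R L_iff2 R_iff3 by blast

end
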